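(* Let $N,k,s,d$ be positive integers with $s\ge3$, let $N\ge s+1$ be prime, and let $\Lambda\subseteq\mathbb{Z}_N$ belong to the family $\Lambda_d(2k,s)$. Let $\vec s=(s_1,\dots,s_l)$ be positive integers with $s_1+\dots+s_l=k$, and let $B(\vec s)=\{i\in[l]: s_i>s\}$. For $x\in\mathbb{Z}_N$ let $E(\vec s)(x)$ be the set of tuples $(\lambda_1,\dots,\lambda_k)\in\Lambda^k$ with $\lambda_1+\dots+\lambda_k=x$ for which there exist pairwise distinct $\tilde\lambda_1,\dots,\tilde\lambda_l\in\Lambda$ such that, for each $i\in[l]$, exactly $s_i$ of the entries $\lambda_1,\dots,\lambda_k$ equal $\tilde\lambda_i$ (so $s_1\tilde\lambda_1+\dots+s_l\tilde\lambda_l=x$). Then for every $x\in\mathbb{Z}_N$, $$|E(\vec s)(x)|\le\frac{k!}{s_1!\cdots s_l!}(s+1)^d|\Lambda|^{|B(\vec s)|}.$$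
   Context: $\mathbb{Z}_N=\mathbb{Z}/N\mathbb{Z}$, $[l]=\{1,\dots,l\}$. Family $\Lambda_d(k,s)$ (for positive integers $k,s,d$): a set $\Lambda=\{\lambda_1,\dots,\lambda_m\}\subseteq\mathbb{Z}_N$ with $\Lambda\cap(-\Lambda)=\emptyset$ belongs to $\Lambda_d(k,s)$ if for every choice of integer vectors $\vec v_1,\dots,\vec v_m\in\mathbb{Z}^d$, $\vec v_j=(v_j^{(1)},\dots,v_j^{(d)})$, with $|v_j^{(i)}|\le s$ for all $i,j$ and $\sum_{j=1}^m|v_j^{(i)}|\le k$ for every $i\in[d]$, satisfying $\lambda_1\vec v_1+\dots+\lambda_m\vec v_m\equiv0\pmod N$ (componentwise), the $d\times m$ matrix $(v_j^{(i)})$ has rank at most $d-1$ (rank over $\mathbb{Q}$). *)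

theory Defs
  imports "HOL-Library.Multiset" "Jordan_Normal_Form.DL_Rank"
begin

text \<open>Elements of Z_N are represented by integers in {0..<N}; congruence mod N
  is expressed with mod. A set Lam of Z_N is enumerated as
  lam_1,...,lam_m by sorted_list_of_set.\<close>

definition in_Lambda_family :: "int \<Rightarrow> nat \<Rightarrow> nat \<Rightarrow> nat \<Rightarrow> int set \<Rightarrow> bool" where
  "in_Lambda_family N d k s Lam \<longleftrightarrow>
     Lam \<subseteq> {0..<N} \<and>
     (\<forall>a\<in>Lam. \<forall>b\<in>Lam. (a + b) mod N \<noteq> 0) \<and>
     (let lams = sorted_list_of_set Lam; m = length lams in
      \<forall>v :: nat \<Rightarrow> nat \<Rightarrow> int.
        ((\<forall>j<m. \<forall>i<d. \<bar>v j i\<bar> \<le> int s) \<and>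
         (\<forall>i<d. (\<Sum>j<m. \<bar>v j i\<bar>) \<le> int k) \<and>
         (\<forall>i<d. (\<Sum>j<m. lams ! j * v j i) mod N = 0))
        \<longrightarrow> vec_space.rank d
              (mat d m (\<lambda>(i, j). rat_of_int (v j i)) :: rat mat) \<le> d - 1)"

definition E_set :: "int \<Rightarrow> int set \<Rightarrow> nat list \<Rightarrow> int \<Rightarrow> int list set" where
  "E_set N Lam ss x = {lam. length lam = sum_list ss \<and> set lam \<subseteq> Lam \<and>
      sum_list lam mod N = x mod N \<and>
      (\<exists>t :: nat \<Rightarrow> int. (\<forall>i<length ss. t i \<in> Lam) \<and> inj_on t {..<length ss} \<and>
          (\<forall>i<length ss. count (mset lam) (t i) = ss ! i))}"

end

theory Submission imports Defs "HOL-Combinatorics.Multiset_Permutations"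
begin

lemma rows_exist:
  fixes V :: "(nat \<Rightarrow> int) set" and s n :: nat
  assumes "\<forall>c\<in>V. \<forall>j. 0 \<le> c j \<and> c j \<le> int s" "card V > (s+1)^n"
  shows "\<exists>w jj. (\<forall>i<n. \<exists>a\<in>V. \<exists>b\<in>V. w i = (\<lambda>j. a j - b j)) \<and> (\<forall>i<n. w i (jj i) \<noteq> 0)
     \<and> (\<forall>i<n. \<forall>i'<i. w i (jj i') = (0::int))"
  using assms
proof (induction n arbitrary: V)
  case 0
  then show ?case by auto
next
  case (Suc n)
  have fin: "finite V" using Suc.prems(2) card.infinite by fastforce
  have "(1::nat) \<le> (s+1)^(Suc n)" by (rule one_le_power) simp
  then have "card V > 1" using Suc.prems(2) by linarith
  then have "\<not> (\<forall>x\<in>V. \<forall>y\<in>V. x = y)" using card_le_Suc0_iff_eq[OF fin] by auto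
  then obtain a b where ab: "a \<in> V" "b \<in> V" "a \<noteq> b" by blast
  then obtain j where j: "a j \<noteq> b j" by (meson ext)
  define C where "C v = {c\<in>V. c j = v}" for v::int
  have Vun: "V = (\<Union>v\<in>{0..int s}. C v)" using Suc.prems(1) unfolding C_def by auto
  have "\<exists>v\<in>{0..int s}. card (C v) > (s+1)^n"
  proof (rule ccontr)
    assume "\<not> ?thesis"
    then have le: "\<forall>v\<in>{0..int s}. card (C v) \<le> (s+1)^n" by auto
    have "card V \<le> (\<Sum>v\<in>{0..int s}. card (C v))"
      by (subst Vun) (rule card_UN_le, simp)
    also have "\<dots> \<le> card {0..int s} * (s+1)^n"
      using sum_bounded_above[of "{0..int s}" "\<lambda>v. card (C v)" "(s+1)^n"] le by auto
    also have "card {0..int s} = s + 1" by simp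
    finally show False using Suc.prems(2) by simp
  qed
  then obtain v where v: "card (C v) > (s+1)^n" by blast
  have CV: "C v \<subseteq> V" unfolding C_def by auto
  have "\<forall>c\<in>C v. \<forall>j. 0 \<le> c j \<and> c j \<le> int s" using Suc.prems(1) CV by blast
  from Suc.IH[OF this v] obtain w jj where
    w1: "\<forall>i<n. \<exists>a\<in>C v. \<exists>b\<in>C v. w i = (\<lambda>j. a j - b j)" and
    w2: "\<forall>i<n. w i (jj i) \<noteq> 0" and w3: "\<forall>i<n. \<forall>i'<i. w i (jj i') = 0"
    by blast
  define w' where "w' i = (if i = 0 then (\<lambda>j'. a j' - b j') else w (i-1))" for i
  define jj' where "jj' i = (if i = 0 then j else jj (i-1))" for i
  have "\<forall>i<Suc n. \<exists>a\<in>V. \<exists>b\<in>V. w' i = (\<lambda>j. a j - b j)"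
  proof (intro allI impI)
    fix i assume "i < Suc n"
    show "\<exists>a\<in>V. \<exists>b\<in>V. w' i = (\<lambda>j. a j - b j)"
    proof (cases "i = 0")
      case True then show ?thesis using ab unfolding w'_def by auto
    next
      case False then have "i-1 < n" using \<open>i < Suc n\<close> by simp
      then obtain a' b' where "a'\<in>C v" "b'\<in>C v" "w (i-1) = (\<lambda>j. a' j - b' j)" using w1 by blast
      then show ?thesis using CV False unfolding w'_def by auto
    qed
  qed
  moreover have "\<forall>i<Suc n. w' i (jj' i) \<noteq> 0"
    using j w2 unfolding w'_def jj'_def by auto
  moreover have "\<forall>i<Suc n. \<forall>i'<i. w' i (jj' i') = 0"
  proof (intro allI impI)
    fix i i' assume i: "i < Suc n" "i' < i"
    show "w' i (jj' i') = 0"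
    proof (cases "i' = 0")
      case True
      obtain a' b' where "a' \<in> C v" "b' \<in> C v" "w (i-1) = (\<lambda>j. a' j - b' j)"
        using w1 i by (metis One_nat_def Suc_pred less_Suc_eq_0_disj not_less0 not_less_eq)
      then show ?thesis using True i unfolding w'_def jj'_def C_def by auto
    next
      case False
      then show ?thesis using w3 i unfolding w'_def jj'_def by auto
    qed
  qed
  ultimately show ?case by blast
qed


lemma rank_full:
  fixes w :: "nat \<Rightarrow> nat \<Rightarrow> int"
  assumes a1: "\<forall>i<d. jj i < m" and a2: "\<forall>i<d. w i (jj i) \<noteq> 0"
    and a3: "\<forall>i<d. \<forall>i'<i. w i (jj i') = 0"
  shows "d \<le> vec_space.rank d (mat d m (\<lambda>(i,j). rat_of_int (w i j)) :: rat mat)"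
proof -
  interpret vec_space "TYPE(rat)" d .
  define A where "A = (mat d m (\<lambda>(i,j). rat_of_int (w i j)) :: rat mat)"
  define C where "C = (mat d d (\<lambda>(i,i'). rat_of_int (w i (jj i'))) :: rat mat)"
  have Ac: "A \<in> carrier_mat d m" by (simp add: A_def)
  have Cc: "C \<in> carrier_mat d d" by (simp add: C_def)
  have ut: "upper_triangular C" unfolding upper_triangular_def C_def using a3 by auto
  have "det C = prod_list (diag_mat C)" by (rule det_upper_triangular[OF ut Cc])
  also have "\<dots> \<noteq> 0" unfolding diag_mat_def C_def using a2 by (auto simp: prod_list_zero_iff)
  finally have "det C \<noteq> 0" .
  then have rC: "rank C = d" using low_rank_det_zero[OF Cc] by blast
  have neq: "col C i \<noteq> col C i'" if "i < i'" "i' < d" for i i'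
  proof
    assume "col C i = col C i'"
    then have "col C i $ i' = col C i' $ i'" by simp
    then show False using that a2 a3 unfolding C_def by auto
  qed
  have dist: "distinct (cols C)"
    unfolding distinct_conv_nth using Cc neq by (auto, metis linorder_neqE_nat)
  have li: "lin_indpt (set (cols C))" by (rule full_rank_lin_indpt[OF Cc rC dist])
  have sub: "set (cols C) \<subseteq> set (cols A)"
  proof
    fix c assume "c \<in> set (cols C)"
    then obtain i' where i': "i' < d" "c = col C i'" using Cc by (auto simp: in_set_conv_nth)
    then have "c = col A (jj i')" unfolding C_def A_def using a1 by (auto intro!: eq_vecI)
    then show "c \<in> set (cols A)" using a1 i' Ac by (auto simp: in_set_conv_nth)
  qed
  have "card (set (cols C)) = d" using dist Cc by (simp add: distinct_card)
  then show ?thesis using rank_ge_card_indpt[OF Ac sub li] A_def by simp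
qed


lemma msum_over:
  fixes f :: "'a \<Rightarrow> int"
  assumes "finite A" "set_mset S \<subseteq> A"
  shows "(\<Sum>x\<in>#S. f x) = (\<Sum>y\<in>A. int (count S y) * f y)"
  using assms(2)
proof (induction S)
  case empty then show ?case by simp
next
  case (add x S)
  have "x \<in> A" using add.prems by simp
  have "(\<Sum>y\<in>A. int (count (add_mset x S) y) * f y)
      = (\<Sum>y\<in>A. int (count S y) * f y) + (\<Sum>y\<in>A. (if y = x then f y else 0))"
  proof -
    have "\<And>y. int (count (add_mset x S) y) * f y = int (count S y) * f y + (if y = x then f y else 0)"
      by (simp add: algebra_simps)
    then show ?thesis by (simp add: sum.distrib)
  qed
  also have "(\<Sum>y\<in>A. (if y = x then f y else 0)) = f x"
    using \<open>x \<in> A\<close> assms(1) by (simp add: sum.delta)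
  finally show ?case using add by simp
qed

lemma sum_set_nth:
  assumes "distinct xs"
  shows "sum g (set xs) = (\<Sum>j<length xs. g (xs ! j))"
  using assms by (simp add: sum.distinct_set_conv_list sum_list_sum_nth atLeast0LessThan)


lemma small_bound:
  fixes N :: int and Lam :: "int set" and SS :: "int multiset set" and r :: int
  assumes fam: "in_Lambda_family N d (2*k) s Lam" and d: "d > 0"
   and SS: "\<forall>S\<in>SS. set_mset S \<subseteq> Lam \<and> (\<forall>y. count S y \<le> s) \<and> size S \<le> k \<and> sum_mset S mod N = r"
  shows "card SS \<le> (s+1)^d"
proof (rule ccontr)
  assume "\<not> ?thesis" then have big: "card SS > (s+1)^d" by simp
  define lams where "lams = sorted_list_of_set Lam"
  define m where "m = length lams"
  have LN: "Lam \<subseteq> {0..<N}" using fam unfolding in_Lambda_family_def by blast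
  have fam3: "\<forall>v :: nat \<Rightarrow> nat \<Rightarrow> int.
        ((\<forall>j<m. \<forall>i<d. \<bar>v j i\<bar> \<le> int s) \<and>
         (\<forall>i<d. (\<Sum>j<m. \<bar>v j i\<bar>) \<le> int (2*k)) \<and>
         (\<forall>i<d. (\<Sum>j<m. lams ! j * v j i) mod N = 0))
        \<longrightarrow> vec_space.rank d
              (mat d m (\<lambda>(i, j). rat_of_int (v j i)) :: rat mat) \<le> d - 1"
    using fam[unfolded in_Lambda_family_def, THEN conjunct2, THEN conjunct2, unfolded Let_def, folded lams_def m_def] .
  have finL: "finite Lam" using LN finite_subset by blast
  have lset: "set lams = Lam" "distinct lams" using finL by (auto simp: lams_def)
  define cv where "cv S = (\<lambda>j. if j < m then int (count S (lams!j)) else 0)" for S :: "int multiset"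
  have inj: "inj_on cv SS"
  proof (rule inj_onI)
    fix S S' assume SS': "S\<in>SS" "S'\<in>SS" "cv S = cv S'"
    show "S = S'"
    proof (rule multiset_eqI)
      fix y show "count S y = count S' y"
      proof (cases "y \<in> Lam")
        case True then obtain j where "j<m" "y = lams!j" using lset by (auto simp: m_def in_set_conv_nth)
        then show ?thesis using fun_cong[OF \<open>cv S = cv S'\<close>, of j] by (simp add: cv_def)
      next
        case False
        then have "y \<notin># S" "y \<notin># S'" using SS SS' by blast+
        then show ?thesis by (simp add: not_in_iff)
      qed
    qed
  qed
  have sizeq: "int (size S) = (\<Sum>j<m. cv S j)" if "set_mset S \<subseteq> Lam" for S
  proof -
    have "int (size S) = (\<Sum>x\<in>#S. (\<lambda>_. 1::int) x)" by (induction S) auto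
    also have "\<dots> = (\<Sum>y\<in>Lam. int (count S y) * 1)" by (rule msum_over[OF finL that])
    also have "\<dots> = (\<Sum>j<m. int (count S (lams!j)))"
      using sum_set_nth[OF lset(2), of "\<lambda>y. int (count S y)"] lset by (simp add: m_def)
    finally show ?thesis by (simp add: cv_def)
  qed
  have sumeq: "sum_mset S = (\<Sum>j<m. lams!j * cv S j)" if "set_mset S \<subseteq> Lam" for S
  proof -
    have "sum_mset S = (\<Sum>x\<in>#S. (\<lambda>x. x) x)" by simp
    also have "\<dots> = (\<Sum>y\<in>Lam. int (count S y) * y)" by (rule msum_over[OF finL that])
    also have "\<dots> = (\<Sum>j<m. int (count S (lams!j)) * lams!j)"
      using sum_set_nth[OF lset(2), of "\<lambda>y. int (count S y) * y"] lset by (simp add: m_def)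
    finally show ?thesis by (simp add: cv_def mult.commute)
  qed
  define V where "V = cv ` SS"
  have "card V = card SS" unfolding V_def by (rule card_image[OF inj])
  then have bigV: "card V > (s+1)^d" using big by simp
  have Vb: "\<forall>c\<in>V. \<forall>j. 0 \<le> c j \<and> c j \<le> int s"
  proof (intro ballI allI)
    fix c j assume "c \<in> V"
    then obtain S where "S \<in> SS" "c = cv S" unfolding V_def by blast
    then show "0 \<le> c j \<and> c j \<le> int s" using SS by (simp add: cv_def)
  qed
  obtain w jj where w1: "\<forall>i<d. \<exists>a\<in>V. \<exists>b\<in>V. w i = (\<lambda>j. a j - b j)"
    and w2: "\<forall>i<d. w i (jj i) \<noteq> 0" and w3: "\<forall>i<d. \<forall>i'<i. w i (jj i') = (0::int)"
    using rows_exist[OF Vb bigV] by blast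
  have wS: "\<exists>S\<in>SS. \<exists>S'\<in>SS. w i = (\<lambda>j. cv S j - cv S' j)" if "i < d" for i
    using w1 that unfolding V_def by blast
  define v where "v = (\<lambda>j i. w i j)"
  have c1: "\<forall>j<m. \<forall>i<d. \<bar>v j i\<bar> \<le> int s"
  proof (intro allI impI)
    fix j i assume "j < m" "i < d"
    then obtain S S' where "S\<in>SS" "S'\<in>SS" "w i = (\<lambda>j. cv S j - cv S' j)" using wS by blast
    note S = this
    have "0 \<le> cv T j \<and> cv T j \<le> int s" if "T \<in> SS" for T
      using SS that by (simp add: cv_def)
    then have a: "0 \<le> cv S j" "cv S j \<le> int s" "0 \<le> cv S' j" "cv S' j \<le> int s" using S by auto
    have "v j i = cv S j - cv S' j" unfolding v_def using S(3) by simp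
    then show "\<bar>v j i\<bar> \<le> int s" using a by (simp add: abs_le_iff)
  qed
  have c2: "\<forall>i<d. (\<Sum>j<m. \<bar>v j i\<bar>) \<le> int (2*k)"
  proof (intro allI impI)
    fix i assume "i < d"
    then obtain S S' where S: "S\<in>SS" "S'\<in>SS" "w i = (\<lambda>j. cv S j - cv S' j)" using wS by blast
    have "(\<Sum>j<m. \<bar>v j i\<bar>) \<le> (\<Sum>j<m. cv S j + cv S' j)"
      by (rule sum_mono) (simp add: v_def S(3) cv_def)
    also have "\<dots> = int (size S) + int (size S')"
      using sizeq SS S by (simp add: sum.distrib)
    also have "\<dots> \<le> int (2*k)"
    proof -
      have "size S \<le> k" "size S' \<le> k" using SS S(1,2) by blast+
      then show ?thesis by simp
    qed
    finally show "(\<Sum>j<m. \<bar>v j i\<bar>) \<le> int (2*k)" .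
  qed
  have c3: "\<forall>i<d. (\<Sum>j<m. lams ! j * v j i) mod N = 0"
  proof (intro allI impI)
    fix i assume "i < d"
    then obtain S S' where S: "S\<in>SS" "S'\<in>SS" "w i = (\<lambda>j. cv S j - cv S' j)" using wS by blast
    have "(\<Sum>j<m. lams ! j * v j i) = (\<Sum>j<m. lams!j * cv S j) - (\<Sum>j<m. lams!j * cv S' j)"
      by (simp add: v_def S(3) right_diff_distrib sum_subtractf)
    also have "\<dots> = sum_mset S - sum_mset S'" using sumeq SS S by simp
    finally show "(\<Sum>j<m. lams ! j * v j i) mod N = 0" using SS S
      by (metis mod_eq_dvd_iff dvd_imp_mod_0)
  qed
  have r1: "vec_space.rank d (mat d m (\<lambda>(i, j). rat_of_int (v j i)) :: rat mat) \<le> d - 1"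
    using fam3 c1 c2 c3 by blast
  have jjm: "\<forall>i<d. jj i < m"
  proof (intro allI impI)
    fix i assume "i < d"
    then obtain S S' where S: "S\<in>SS" "S'\<in>SS" "w i = (\<lambda>j. cv S j - cv S' j)" using wS by blast
    show "jj i < m"
    proof (rule ccontr)
      assume "\<not> jj i < m" then have "w i (jj i) = 0" using S(3) by (simp add: cv_def)
      then show False using w2 \<open>i < d\<close> by blast
    qed
  qed
  have "d \<le> vec_space.rank d (mat d m (\<lambda>(i,j). rat_of_int (w i j)) :: rat mat)"
    by (rule rank_full[OF jjm w2 w3])
  then show False using r1 d unfolding v_def by simp
qed


lemma count_struct:
  fixes M :: "'a multiset"
  assumes "size M = sum_list ss" "inj_on t {..<length ss}" "\<forall>i<length ss. count M (t i) = ss!i"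
    and "y \<notin> t ` {..<length ss}"
  shows "count M y = 0"
proof (rule ccontr)
  assume ne: "count M y \<noteq> 0"
  define T where "T = t ` {..<length ss}"
  have "(\<Sum>z\<in>T. count M z) = (\<Sum>i<length ss. count M (t i))"
    unfolding T_def by (rule sum.reindex_cong[OF assms(2)]) auto
  also have "\<dots> = (\<Sum>i<length ss. ss!i)" using assms(3) by simp
  also have "\<dots> = sum_list ss" by (simp add: sum_list_sum_nth atLeast0LessThan)
  finally have sT: "(\<Sum>z\<in>T. count M z) = size M" using assms(1) by simp
  have finT: "finite T" unfolding T_def by simp
  have "size M = (\<Sum>z\<in>set_mset M. count M z)" by (rule size_multiset_overloaded_eq)
  also have "\<dots> = (\<Sum>z\<in>set_mset M \<union> T. count M z)"
    by (rule sum.mono_neutral_left) (use finT in \<open>auto simp: not_in_iff\<close>)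
  also have "\<dots> = (\<Sum>z\<in>T. count M z) + (\<Sum>z\<in>(set_mset M \<union> T) - T. count M z)"
    using sum.subset_diff[of T "set_mset M \<union> T" "count M"] finT by simp
  finally have "(\<Sum>z\<in>(set_mset M \<union> T) - T. count M z) = 0" using sT by simp
  moreover have "y \<in> (set_mset M \<union> T) - T" using ne assms(4) unfolding T_def by (simp add: count_eq_zero_iff)
  ultimately show False using ne finT by (simp add: sum_eq_0_iff) (metis DiffI UnI1 count_eq_zero_iff)
qed


theorem lemma25:
  fixes N :: int and k s d :: nat and Lam :: "int set" and ss :: "nat list" and x :: int
  assumes "k > 0" and "s > 0" and "d > 0" and "s \<ge> 3"
    and "prime N" and "N \<ge> int s + 1"
    and "in_Lambda_family N d (2 * k) s Lam"
    and "\<forall>i<length ss. ss ! i > 0" and "sum_list ss = k"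
    and "x \<in> {0..<N}"
  shows "real (card (E_set N Lam ss x))
    \<le> real (fact k) / real (\<Prod>i<length ss. fact (ss ! i))
       * real (s + 1) ^ d * real (card Lam) ^ card {i. i < length ss \<and> ss ! i > s}"
proof -
  note fam = assms(7)
  define l where "l = length ss"
  define E where "E = E_set N Lam ss x"
  define MM where "MM = mset ` E"
  define B where "B = {i. i < length ss \<and> ss ! i > s}"
  define P where "P = (\<Prod>i<length ss. fact (ss ! i) :: nat)"
  have LN: "Lam \<subseteq> {0..<N}" using fam unfolding in_Lambda_family_def by blast
  have finL: "finite Lam" using LN finite_subset by blast
  have "E \<subseteq> {xs. set xs \<subseteq> Lam \<and> length xs = k}" unfolding E_def E_set_def using assms(9) by auto
  then have finE: "finite E" using finite_lists_length_eq[OF finL] finite_subset by blast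
  have finMM: "finite MM" unfolding MM_def using finE by simp
  have MMprop: "set_mset M \<subseteq> Lam \<and> size M = k \<and> sum_mset M mod N = x mod N \<and>
     (\<exists>t. (\<forall>i<l. t i \<in> Lam) \<and> inj_on t {..<l} \<and> (\<forall>i<l. count M (t i) = ss ! i)
          \<and> set_mset M = t ` {..<l} \<and> (\<forall>y. y \<notin> t ` {..<l} \<longrightarrow> count M y = 0))"
    if Min: "M \<in> MM" for M
  proof -
    obtain lam where lam: "lam \<in> E" "M = mset lam" using Min unfolding MM_def by blast
    then have l1: "length lam = k" "set lam \<subseteq> Lam" "sum_list lam mod N = x mod N"
      and "\<exists>t. (\<forall>i<l. t i \<in> Lam) \<and> inj_on t {..<l} \<and> (\<forall>i<l. count (mset lam) (t i) = ss ! i)"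
      unfolding E_def E_set_def l_def using assms(9) by auto
    then obtain t where t: "\<forall>i<l. t i \<in> Lam" "inj_on t {..<l}" "\<forall>i<l. count M (t i) = ss ! i"
      using lam(2) by blast
    have sz: "size M = k" using l1 lam by simp
    have z: "\<forall>y. y \<notin> t ` {..<l} \<longrightarrow> count M y = 0"
      using count_struct[of M ss t] sz assms(9) t unfolding l_def by simp
    have "set_mset M = t ` {..<l}"
    proof
      show "set_mset M \<subseteq> t ` {..<l}" using z by (meson count_eq_zero_iff subsetI)
      show "t ` {..<l} \<subseteq> set_mset M" using t(3) assms(8) unfolding l_def
        by (metis (no_types, lifting) count_eq_zero_iff image_subset_iff lessThan_iff not_gr0)
    qed
    then show ?thesis using l1 lam sz t z by (auto simp: sum_mset_sum_list)
  qed
  have cardperm: "card (permutations_of_multiset M) = fact k div P \<and> P dvd fact k" if Min: "M \<in> MM" for M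
  proof -
    obtain t where t: "inj_on t {..<l}" "\<forall>i<l. count M (t i) = ss ! i" "set_mset M = t ` {..<l}"
      using MMprop[OF Min] by blast
    have "(\<Prod>y\<in>set_mset M. fact (count M y)) = (\<Prod>i<l. fact (count M (t i)))"
      unfolding t(3) by (rule prod.reindex[OF t(1), unfolded comp_def])
    also have "\<dots> = P" unfolding P_def l_def using t(2) l_def by simp
    finally have "(\<Prod>y\<in>set_mset M. fact (count M y)) = P" .
    then show ?thesis using card_permutations_of_multiset[of M] MMprop[OF Min] by simp
  qed
  have step1: "card E \<le> card MM * (fact k div P)"
  proof -
    have "E \<subseteq> (\<Union>M\<in>MM. permutations_of_multiset M)"
      unfolding MM_def by (auto intro: permutations_of_multisetI)
    then have "card E \<le> card (\<Union>M\<in>MM. permutations_of_multiset M)"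
      by (rule card_mono[rotated]) (use finMM in simp)
    also have "\<dots> \<le> (\<Sum>M\<in>MM. card (permutations_of_multiset M))" by (rule card_UN_le[OF finMM])
    also have "\<dots> = (\<Sum>M\<in>MM. fact k div P)" using cardperm by simp
    finally show ?thesis by simp
  qed
  define Lg where "Lg M = filter_mset (\<lambda>y. s < count M y) M" for M :: "int multiset"
  define Sm where "Sm M = filter_mset (\<lambda>y. \<not> s < count M y) M" for M :: "int multiset"
  have split: "M = Lg M + Sm M" for M unfolding Lg_def Sm_def by (rule multiset_partition)
  define LL where "LL = Lg ` MM"
  have finLL: "finite LL" unfolding LL_def using finMM by simp
  have fib: "card {M\<in>MM. Lg M = L} \<le> (s+1)^d" for L
  proof -
    have inj: "inj_on Sm {M\<in>MM. Lg M = L}"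
      by (rule inj_onI) (metis (mono_tags, lifting) mem_Collect_eq split)
    have "\<forall>S\<in>Sm ` {M\<in>MM. Lg M = L}. set_mset S \<subseteq> Lam \<and> (\<forall>y. count S y \<le> s) \<and> size S \<le> k
         \<and> sum_mset S mod N = (x - sum_mset L) mod N"
    proof
      fix S assume "S \<in> Sm ` {M\<in>MM. Lg M = L}"
      then obtain M where M: "M \<in> MM" "Lg M = L" "S = Sm M" by blast
      note MP = MMprop[OF M(1)]
      have "set_mset S \<subseteq> Lam" using MP M(3) unfolding Sm_def by auto
      moreover have "\<forall>y. count S y \<le> s" using M(3) unfolding Sm_def by simp
      moreover have "size S \<le> k" using M(3) MP unfolding Sm_def by (metis size_filter_mset_lesseq)
      moreover have "sum_mset S mod N = (x - sum_mset L) mod N"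
      proof -
        have "sum_mset M = sum_mset L + sum_mset S" using split[of M] M by (metis sum_mset.union)
        then have "sum_mset S = sum_mset M - sum_mset L" by simp
        then show ?thesis using MP by (metis mod_diff_left_eq)
      qed
      ultimately show "set_mset S \<subseteq> Lam \<and> (\<forall>y. count S y \<le> s) \<and> size S \<le> k
         \<and> sum_mset S mod N = (x - sum_mset L) mod N" by blast
    qed
    then have "card (Sm ` {M\<in>MM. Lg M = L}) \<le> (s+1)^d"
      by (rule small_bound[OF fam assms(3)])
    then show ?thesis using card_image[OF inj] by simp
  qed
  have "MM = (\<Union>L\<in>LL. {M\<in>MM. Lg M = L})" unfolding LL_def by auto
  then have "card MM \<le> (\<Sum>L\<in>LL. card {M\<in>MM. Lg M = L})"
    by (metis card_UN_le[OF finLL])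
  also have "\<dots> \<le> card LL * (s+1)^d"
    using sum_bounded_above[of LL "\<lambda>L. card {M\<in>MM. Lg M = L}" "(s+1)^d"] fib by simp
  finally have cMM: "card MM \<le> card LL * (s+1)^d" .
  define g where "g f = (\<Sum>i\<in>B. replicate_mset (ss!i) (f i))" for f :: "nat \<Rightarrow> int"
  have finB: "finite B" unfolding B_def by simp
  have LLsub: "LL \<subseteq> g ` (B \<rightarrow>\<^sub>E Lam)"
  proof
    fix L assume "L \<in> LL"
    then obtain M where M: "M \<in> MM" "L = Lg M" unfolding LL_def by blast
    obtain t where t: "\<forall>i<l. t i \<in> Lam" "inj_on t {..<l}" "\<forall>i<l. count M (t i) = ss ! i"
       "\<forall>y. y \<notin> t ` {..<l} \<longrightarrow> count M y = 0"
      using MMprop[OF M(1)] by blast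
    have Bl: "B \<subseteq> {..<l}" unfolding B_def l_def by auto
    have "restrict t B \<in> B \<rightarrow>\<^sub>E Lam" using t(1) Bl by auto
    moreover have "L = g (restrict t B)"
    proof (rule multiset_eqI)
      fix y
      have cg: "count (g (restrict t B)) y = (\<Sum>i\<in>B. if y = t i then ss!i else 0)"
        unfolding g_def by (simp add: count_sum cong: sum.cong)
      show "count L y = count (g (restrict t B)) y"
      proof (cases "y \<in> t ` {..<l}")
        case True
        then obtain i0 where i0: "i0 < l" "y = t i0" by blast
        have "(\<Sum>i\<in>B. if y = t i then ss!i else 0) = (\<Sum>i\<in>B. if i = i0 then ss!i else 0)"
          using t(2) i0 Bl by (intro sum.cong) (auto simp: inj_on_def)
        also have "\<dots> = (if i0 \<in> B then ss!i0 else 0)" using finB by simp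
        finally show ?thesis using cg M(2) i0 t(3) unfolding Lg_def B_def l_def by auto
      next
        case False
        have "(\<Sum>i\<in>B. if y = t i then ss!i else 0) = 0"
          using False Bl by (intro sum.neutral) auto
        then show ?thesis using cg M(2) t(4) False unfolding Lg_def by simp
      qed
    qed
    ultimately show "L \<in> g ` (B \<rightarrow>\<^sub>E Lam)" by blast
  qed
  have "card LL \<le> card (B \<rightarrow>\<^sub>E Lam)"
    by (rule card_mono[OF _ LLsub, THEN order_trans]) (auto intro!: card_image_le finite_PiE finB finL)
  also have "\<dots> = card Lam ^ card B" using finB by (simp add: card_PiE)
  finally have cLL: "card LL \<le> card Lam ^ card B" .
  have nat_bound: "card E \<le> card Lam ^ card B * (s+1)^d * (fact k div P)"
    using step1 cMM cLL by (meson le_trans mult_le_mono1)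
  show ?thesis
  proof (cases "E = {}")
    case True
    have "0 \<le> real (fact k) / real (\<Prod>i<length ss. fact (ss ! i))
       * real (s + 1) ^ d * real (card Lam) ^ card {i. i < length ss \<and> ss ! i > s}"
      by (intro mult_nonneg_nonneg divide_nonneg_nonneg) (auto intro: prod_nonneg)
    then show ?thesis using True unfolding E_def by simp
  next
    case False
    then obtain M where "M \<in> MM" unfolding MM_def by blast
    then have dv: "P dvd fact k" using cardperm by blast
    have "real (card E) \<le> real (card Lam ^ card B * (s+1)^d * (fact k div P))"
      using nat_bound by linarith
    also have "\<dots> = real (card Lam) ^ card B * real (s+1)^d * (real (fact k) / real P)"
      using real_of_nat_div[OF dv] by simp
    finally show ?thesis unfolding E_def P_def B_def by (simp add: algebra_simps)
  qed
qed

end
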